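(* Let $v$ be a flow on a surface $S$. Every circuit with wandering holonomy is not a periodic orbit, and it contains a point of $\Omega(v)-\overline{\mathrm{Cl}(v)}$.
   Context: Surface: 2-dimensional paracompact manifold. $\mathrm{Cl}(v)$ is the union of singular points and periodic orbits; $\Omega(v)$ the set of non-wandering points. A separatrix is a non-singular orbit whose $\alpha$- or $\omega$-limit set is a singular point. A non-trivial circuit is the image of an oriented circle under a continuous orientation-preserving map which is either a periodic orbit, or a directed graph (not a singleton) that is a union of separatrices and finitely many singular points. A circuit with wandering holonomy is a non-trivial circuit $\gamma$ for which there are a non-singular point $x\in\gamma$ and arbitrarily small open transverse arcs $I$ containing $x$ such that the (partially defined) first return map on $I$ is orientation-reversing, has nonempty domain, and its domain and image are disjoint. *)

theory Defs
  imports "HOL-Analysis.Analysis"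
begin

definition paracompact_space :: "'a topology \<Rightarrow> bool" where
  "paracompact_space S \<longleftrightarrow>
     (\<forall>\<U>. (\<forall>U\<in>\<U>. openin S U) \<and> \<Union>\<U> = topspace S \<longrightarrow>
        (\<exists>\<V>. (\<forall>V\<in>\<V>. openin S V) \<and> \<Union>\<V> = topspace S \<and>
              (\<forall>V\<in>\<V>. \<exists>U\<in>\<U>. V \<subseteq> U) \<and> locally_finite_in S \<V>))"

definition surface :: "'a topology \<Rightarrow> bool" where
  "surface S \<longleftrightarrow> Hausdorff_space S \<and> paracompact_space S \<and>
     (\<forall>x\<in>topspace S. \<exists>U. openin S U \<and> x \<in> U \<and>
        subtopology S U homeomorphic_space (euclidean :: (real^2) topology))"

definition flow :: "'a topology \<Rightarrow> (real \<Rightarrow> 'a \<Rightarrow> 'a) \<Rightarrow> bool" where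
  "flow S v \<longleftrightarrow>
     continuous_map (prod_topology euclideanreal S) S (\<lambda>(t, x). v t x) \<and>
     (\<forall>x\<in>topspace S. v 0 x = x) \<and>
     (\<forall>x\<in>topspace S. \<forall>s t. v (s + t) x = v s (v t x))"

definition orbit :: "(real \<Rightarrow> 'a \<Rightarrow> 'a) \<Rightarrow> 'a \<Rightarrow> 'a set" where
  "orbit v x = (\<lambda>t. v t x) ` UNIV"

definition singular_point :: "'a topology \<Rightarrow> (real \<Rightarrow> 'a \<Rightarrow> 'a) \<Rightarrow> 'a \<Rightarrow> bool" where
  "singular_point S v x \<longleftrightarrow> x \<in> topspace S \<and> (\<forall>t. v t x = x)"

definition periodic_point :: "'a topology \<Rightarrow> (real \<Rightarrow> 'a \<Rightarrow> 'a) \<Rightarrow> 'a \<Rightarrow> bool" where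
  "periodic_point S v x \<longleftrightarrow> x \<in> topspace S \<and> \<not> singular_point S v x \<and> (\<exists>T>0. v T x = x)"

definition periodic_orbit :: "'a topology \<Rightarrow> (real \<Rightarrow> 'a \<Rightarrow> 'a) \<Rightarrow> 'a set \<Rightarrow> bool" where
  "periodic_orbit S v Orb \<longleftrightarrow> (\<exists>x. periodic_point S v x \<and> Orb = orbit v x)"

definition Cl :: "'a topology \<Rightarrow> (real \<Rightarrow> 'a \<Rightarrow> 'a) \<Rightarrow> 'a set" where
  "Cl S v = {x. singular_point S v x \<or> periodic_point S v x}"

definition nonwandering :: "'a topology \<Rightarrow> (real \<Rightarrow> 'a \<Rightarrow> 'a) \<Rightarrow> 'a set" where
  "nonwandering S v = {x \<in> topspace S. \<forall>U. openin S U \<and> x \<in> U \<longrightarrow>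
       (\<forall>N. \<exists>t>N. \<exists>y\<in>U. v t y \<in> U)}"

definition omega_limit :: "'a topology \<Rightarrow> (real \<Rightarrow> 'a \<Rightarrow> 'a) \<Rightarrow> 'a \<Rightarrow> 'a set" where
  "omega_limit S v x = {y \<in> topspace S. \<forall>U. openin S U \<and> y \<in> U \<longrightarrow>
       (\<forall>T. \<exists>t\<ge>T. v t x \<in> U)}"

definition alpha_limit :: "'a topology \<Rightarrow> (real \<Rightarrow> 'a \<Rightarrow> 'a) \<Rightarrow> 'a \<Rightarrow> 'a set" where
  "alpha_limit S v x = {y \<in> topspace S. \<forall>U. openin S U \<and> y \<in> U \<longrightarrow>
       (\<forall>T. \<exists>t\<le>T. v t x \<in> U)}"

definition separatrix :: "'a topology \<Rightarrow> (real \<Rightarrow> 'a \<Rightarrow> 'a) \<Rightarrow> 'a set \<Rightarrow> bool" where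
  "separatrix S v Orb \<longleftrightarrow> (\<exists>x. x \<in> topspace S \<and> \<not> singular_point S v x \<and> Orb = orbit v x \<and>
       (\<exists>p. singular_point S v p \<and> (omega_limit S v x = {p} \<or> alpha_limit S v x = {p})))"

text \<open>A loop \<open>c\<close> (a 1-periodic continuous map from the reals, i.e. a map from the
  oriented circle) is orientation-preserving if near every parameter whose image is
  non-singular it runs along the flow in the positive direction.\<close>
definition orientation_preserving_loop ::
  "'a topology \<Rightarrow> (real \<Rightarrow> 'a \<Rightarrow> 'a) \<Rightarrow> (real \<Rightarrow> 'a) \<Rightarrow> bool" where
  "orientation_preserving_loop S v c \<longleftrightarrow>
     continuous_map euclideanreal S c \<and> (\<forall>s. c (s + 1) = c s) \<and>
     (\<forall>s. \<not> singular_point S v (c s) \<longrightarrow>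
        (\<exists>\<delta>>0. \<exists>\<tau>. \<tau> s = 0 \<and> strict_mono_on {s - \<delta><..<s + \<delta>} \<tau> \<and>
            continuous_on {s - \<delta><..<s + \<delta>} \<tau> \<and>
            (\<forall>u\<in>{s - \<delta><..<s + \<delta>}. c u = v (\<tau> u) (c s))))"

definition nontrivial_circuit :: "'a topology \<Rightarrow> (real \<Rightarrow> 'a \<Rightarrow> 'a) \<Rightarrow> 'a set \<Rightarrow> bool" where
  "nontrivial_circuit S v \<gamma> \<longleftrightarrow>
     periodic_orbit S v \<gamma> \<or>
     (\<exists>c. orientation_preserving_loop S v c \<and> \<gamma> = c ` {0..1} \<and>
        (\<nexists>p. \<gamma> = {p}) \<and>
        (\<exists>P \<Sigma>. finite P \<and> (\<forall>p\<in>P. singular_point S v p) \<and>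
               (\<forall>Orb\<in>\<Sigma>. separatrix S v Orb) \<and> \<gamma> = P \<union> \<Union>\<Sigma>))"

text \<open>\<open>I\<close> is an open transverse arc parametrised by the homeomorphism \<open>h\<close> from the open
  interval (0,1): the flow restricted to (-eps,eps) x I is a homeomorphism onto an open set
  (a flow box).\<close>
definition open_transverse_arc ::
  "'a topology \<Rightarrow> (real \<Rightarrow> 'a \<Rightarrow> 'a) \<Rightarrow> 'a set \<Rightarrow> (real \<Rightarrow> 'a) \<Rightarrow> bool" where
  "open_transverse_arc S v I h \<longleftrightarrow>
     I \<subseteq> topspace S \<and> h ` {0<..<1} = I \<and>
     homeomorphic_map (subtopology euclideanreal {0<..<1}) (subtopology S I) h \<and>
     (\<exists>\<epsilon>>0. \<exists>W. openin S W \<and>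
        homeomorphic_map (prod_topology (subtopology euclideanreal {-\<epsilon><..<\<epsilon>}) (subtopology S I))
                         (subtopology S W) (\<lambda>(t, y). v t y))"

definition first_return_time :: "(real \<Rightarrow> 'a \<Rightarrow> 'a) \<Rightarrow> 'a set \<Rightarrow> 'a \<Rightarrow> real \<Rightarrow> bool" where
  "first_return_time v I y \<tau> \<longleftrightarrow>
     y \<in> I \<and> \<tau> > 0 \<and> v \<tau> y \<in> I \<and> (\<forall>t. 0 < t \<and> t < \<tau> \<longrightarrow> v t y \<notin> I)"

definition first_return_dom :: "(real \<Rightarrow> 'a \<Rightarrow> 'a) \<Rightarrow> 'a set \<Rightarrow> 'a set" where
  "first_return_dom v I = {y. \<exists>\<tau>. first_return_time v I y \<tau>}"

definition first_return :: "(real \<Rightarrow> 'a \<Rightarrow> 'a) \<Rightarrow> 'a set \<Rightarrow> 'a \<Rightarrow> 'a" where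
  "first_return v I y = v (THE \<tau>. first_return_time v I y \<tau>) y"

definition orientation_reversing_return ::
  "(real \<Rightarrow> 'a \<Rightarrow> 'a) \<Rightarrow> 'a set \<Rightarrow> (real \<Rightarrow> 'a) \<Rightarrow> bool" where
  "orientation_reversing_return v I h \<longleftrightarrow>
     (\<forall>a b a' b'. a \<in> {0<..<1} \<and> b \<in> {0<..<1} \<and> a' \<in> {0<..<1} \<and> b' \<in> {0<..<1} \<and>
        h a \<in> first_return_dom v I \<and> h b \<in> first_return_dom v I \<and>
        first_return v I (h a) = h a' \<and> first_return v I (h b) = h b' \<and> a < b \<longrightarrow> b' < a')"

definition wandering_holonomy :: "'a topology \<Rightarrow> (real \<Rightarrow> 'a \<Rightarrow> 'a) \<Rightarrow> 'a set \<Rightarrow> bool" where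
  "wandering_holonomy S v \<gamma> \<longleftrightarrow>
     nontrivial_circuit S v \<gamma> \<and>
     (\<exists>x\<in>\<gamma>. \<not> singular_point S v x \<and>
        (\<forall>U. openin S U \<and> x \<in> U \<longrightarrow>
           (\<exists>I h. I \<subseteq> U \<and> x \<in> I \<and> open_transverse_arc S v I h \<and>
                  orientation_reversing_return v I h \<and>
                  first_return_dom v I \<noteq> {} \<and>
                  first_return_dom v I \<inter> first_return v I ` first_return_dom v I = {})))"

end

theory Submission
  imports Defs
begin


lemma flow_in: "flow S v \<Longrightarrow> x \<in> topspace S \<Longrightarrow> v t x \<in> topspace S"
  unfolding flow_def continuous_map_def by (auto simp: Pi_iff)

lemma flow_add: "flow S v \<Longrightarrow> x \<in> topspace S \<Longrightarrow> v (s + t) x = v s (v t x)"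
  unfolding flow_def by auto

lemma flow_0: "flow S v \<Longrightarrow> x \<in> topspace S \<Longrightarrow> v 0 x = x"
  unfolding flow_def by auto

lemma arc_sub: "open_transverse_arc S v I h \<Longrightarrow> I \<subseteq> topspace S"
  unfolding open_transverse_arc_def by auto

lemma arc_inj:
  assumes fl: "flow S v" and arc: "open_transverse_arc S v I h"
  obtains \<epsilon> where "\<epsilon>>0" "\<And>y t. y\<in>I \<Longrightarrow> t \<noteq> 0 \<Longrightarrow> \<bar>t\<bar><\<epsilon> \<Longrightarrow> v t y \<notin> I"
proof -
  obtain \<epsilon> W where e: "\<epsilon>>0" and hm: "homeomorphic_map (prod_topology (subtopology euclideanreal {-\<epsilon><..<\<epsilon>}) (subtopology S I))
                         (subtopology S W) (\<lambda>(t, y). v t y)"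
    using arc unfolding open_transverse_arc_def by blast
  have IS: "I \<subseteq> topspace S" using arc_sub[OF arc] .
  have inj: "inj_on (\<lambda>(t,y). v t y) ({-\<epsilon><..<\<epsilon>} \<times> I)"
    using homeomorphic_imp_injective_map[OF hm] IS by (simp add: Int_absorb1)
  have "v t y \<notin> I" if "y\<in>I" "t\<noteq>0" "\<bar>t\<bar><\<epsilon>" for y t
  proof
    assume vI: "v t y \<in> I"
    have "v 0 (v t y) = v t y" using flow_0[OF fl] vI IS by auto
    then have "(\<lambda>(t,y). v t y) (t,y) = (\<lambda>(t,y). v t y) (0, v t y)" by simp
    moreover have "(t,y) \<in> {-\<epsilon><..<\<epsilon>} \<times> I" "(0, v t y) \<in> {-\<epsilon><..<\<epsilon>} \<times> I"
      using that vI e by auto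
    ultimately have "(t,y) = (0, v t y)" using inj by (meson inj_onD)
    thus False using that by simp
  qed
  thus ?thesis using that e by blast
qed

lemma first_return_exists:
  assumes fl: "flow S v" and IS: "I \<subseteq> topspace S"
    and y: "y \<in> I" "0 < t0" "v t0 y \<in> I" and e: "\<epsilon>>0"
    and sep: "\<And>y t. y\<in>I \<Longrightarrow> t \<noteq> 0 \<Longrightarrow> \<bar>t\<bar><\<epsilon> \<Longrightarrow> v t y \<notin> I"
  shows "\<exists>\<tau>. first_return_time v I y \<tau> \<and> \<tau> \<le> t0"
proof -
  define R where "R = {t. 0<t \<and> t\<le>t0 \<and> v t y \<in> I}"
  have ne: "R \<noteq> {}" using y unfolding R_def by auto
  have bdd: "bdd_below R" unfolding R_def by (rule bdd_belowI[of _ 0]) auto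
  define \<tau> where "\<tau> = Inf R"
  have low: "\<tau> \<le> t" if "t \<in> R" for t using cInf_lower[OF that bdd] \<tau>_def by simp
  have "\<tau> \<in> R"
  proof (rule ccontr)
    assume nR: "\<tau> \<notin> R"
    obtain t1 where t1: "t1 \<in> R" "t1 < \<tau> + \<epsilon>"
      using cInf_lessD[OF ne, of "\<tau> + \<epsilon>"] e \<tau>_def by auto
    have "\<tau> < t1" using low[OF t1(1)] nR t1(1) by (cases "\<tau> = t1") auto
    then obtain t2 where t2: "t2 \<in> R" "t2 < t1"
      using cInf_lessD[OF ne, of t1] \<tau>_def by auto
    have "\<tau> < t2" using low[OF t2(1)] nR t2(1) by (cases "\<tau> = t2") auto
    have yS: "y \<in> topspace S" using y IS by auto
    have "v t1 y = v (t1 - t2) (v t2 y)" using flow_add[OF fl yS, of "t1 - t2" t2] by simp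
    moreover have "v t2 y \<in> I" using t2 R_def by auto
    ultimately have "v t1 y \<notin> I" using sep[of "v t2 y" "t1 - t2"] t1 t2 \<open>\<tau> < t2\<close> by auto
    thus False using t1 R_def by auto
  qed
  hence "first_return_time v I y \<tau>"
    unfolding first_return_time_def using y low R_def
    by (smt (verit, ccfv_SIG) mem_Collect_eq)
  thus ?thesis using \<open>\<tau> \<in> R\<close> R_def by auto
qed

lemma frt_unique: "first_return_time v I y a \<Longrightarrow> first_return_time v I y b \<Longrightarrow> a = b"
  unfolding first_return_time_def by (meson linorder_neqE_linordered_idom)

lemma first_return_eq: "first_return_time v I y \<tau> \<Longrightarrow> first_return v I y = v \<tau> y"
  unfolding first_return_def using frt_unique by (metis the_equality)

lemma no_periodic_in_arc:
  assumes fl: "flow S v" and arc: "open_transverse_arc S v I h"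
    and disj: "first_return_dom v I \<inter> first_return v I ` first_return_dom v I = {}"
    and y: "y \<in> I" "T > 0" "v T y = y"
  shows False
proof -
  obtain \<epsilon> where e: "\<epsilon>>0" and sep: "\<And>y t. y\<in>I \<Longrightarrow> t \<noteq> 0 \<Longrightarrow> \<bar>t\<bar><\<epsilon> \<Longrightarrow> v t y \<notin> I"
    using arc_inj[OF fl arc] by blast
  have IS: "I \<subseteq> topspace S" using arc_sub[OF arc] .
  obtain \<tau> where t: "first_return_time v I y \<tau>"
    using first_return_exists[OF fl IS y(1) y(2) _ e sep] y by auto
  have yd: "y \<in> first_return_dom v I" using t unfolding first_return_dom_def by auto
  have zI: "v \<tau> y \<in> I" using t unfolding first_return_time_def by auto
  have zim: "v \<tau> y \<in> first_return v I ` first_return_dom v I"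
    using first_return_eq[OF t] yd by force
  have yS: "y \<in> topspace S" using y IS by auto
  have "v T (v \<tau> y) = v \<tau> (v T y)"
    using flow_add[OF fl yS, of T \<tau>] flow_add[OF fl yS, of \<tau> T] by (simp add: add.commute)
  hence zT: "v T (v \<tau> y) \<in> I" using y zI by simp
  obtain \<tau>' where "first_return_time v I (v \<tau> y) \<tau>'"
    using first_return_exists[OF fl IS zI y(2) zT e sep] by auto
  hence "v \<tau> y \<in> first_return_dom v I" unfolding first_return_dom_def by auto
  thus False using zim disj by auto
qed



lemma locinj_max:
  fixes g :: "real \<Rightarrow> real"
  assumes ab: "a < b" and cont: "continuous_on {a..b} g"
    and li: "\<forall>c\<in>{a..b}. \<exists>r>0. \<forall>d\<in>{a..b}. \<forall>d'\<in>{a..b}. \<bar>d-c\<bar><r \<longrightarrow> \<bar>d'-c\<bar><r \<longrightarrow> g d = g d' \<longrightarrow> d = d'"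
    and eq: "g a = g b" and c: "c \<in> {a..b}" "\<forall>d\<in>{a..b}. g d \<le> g c" "g c > g a"
  shows False
proof -
  have "c \<noteq> a" "c \<noteq> b" using c(3) eq by auto
  hence ac: "a < c" "c < b" using c(1) by auto
  obtain r where r: "r>0" "\<forall>d\<in>{a..b}. \<forall>d'\<in>{a..b}. \<bar>d-c\<bar><r \<longrightarrow> \<bar>d'-c\<bar><r \<longrightarrow> g d = g d' \<longrightarrow> d = d'"
    using li c by blast
  define d1 where "d1 = max a (c - r/2)"
  define d2 where "d2 = min b (c + r/2)"
  have d: "a \<le> d1" "d1 < c" "c < d2" "d2 \<le> b" "\<bar>d1 - c\<bar> < r" "\<bar>d2 - c\<bar> < r"
    using ac r unfolding d1_def d2_def by auto
  have d1i: "d1 \<in> {a..b}" and d2i: "d2 \<in> {a..b}" using d ac by auto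
  have "g d1 \<noteq> g c" using r(2)[rule_format, OF d1i c(1)] d r(1) by auto
  hence g1: "g d1 < g c" using c(2) d1i by force
  have "g d2 \<noteq> g c" using r(2)[rule_format, OF d2i c(1)] d r(1) by auto
  hence g2: "g d2 < g c" using c(2) d2i by force
  show False
  proof (cases "g d1 \<le> g d2")
    case True
    have "continuous_on {d1..c} g" using cont d by (auto intro: continuous_on_subset)
    then obtain e where e: "d1 \<le> e" "e \<le> c" "g e = g d2"
      using IVT'[of g d1 "g d2" c] True g2 d by auto
    have "e \<in> {a..b}" "\<bar>e - c\<bar> < r" using e d by auto
    hence "e = d2" using r(2)[rule_format, OF _ d2i] e d by auto
    thus False using e d by simp
  next
    case False
    have "continuous_on {c..d2} g" using cont d by (auto intro: continuous_on_subset)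
    then obtain e where e: "c \<le> e" "e \<le> d2" "g e = g d1"
      using IVT2'[of g d2 "g d1" c] False g1 d by auto
    have "e \<in> {a..b}" "\<bar>e - c\<bar> < r" using e d by auto
    hence "e = d1" using r(2)[rule_format, OF _ d1i] e d by auto
    thus False using e d by simp
  qed
qed

lemma locinj_real:
  fixes g :: "real \<Rightarrow> real"
  assumes ab: "a < b" and cont: "continuous_on {a..b} g"
    and li: "\<forall>c\<in>{a..b}. \<exists>r>0. \<forall>d\<in>{a..b}. \<forall>d'\<in>{a..b}. \<bar>d-c\<bar><r \<longrightarrow> \<bar>d'-c\<bar><r \<longrightarrow> g d = g d' \<longrightarrow> d = d'"
  shows "g a \<noteq> g b"
proof
  assume eq: "g a = g b"
  obtain cM where cM: "cM \<in> {a..b}" "\<forall>d\<in>{a..b}. g d \<le> g cM"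
    using continuous_attains_sup[of "{a..b}" g] cont ab by auto
  obtain cm where cm: "cm \<in> {a..b}" "\<forall>d\<in>{a..b}. g cm \<le> g d"
    using continuous_attains_inf[of "{a..b}" g] cont ab by auto
  have nM: "\<not> g cM > g a" using locinj_max[OF ab cont li eq cM] by blast
  moreover have "\<not> - g cm > - g a"
  proof
    assume "- g cm > - g a"
    moreover have "continuous_on {a..b} (\<lambda>x. - g x)" using cont by (intro continuous_intros)
    moreover have "\<forall>c\<in>{a..b}. \<exists>r>0. \<forall>d\<in>{a..b}. \<forall>d'\<in>{a..b}. \<bar>d-c\<bar><r \<longrightarrow> \<bar>d'-c\<bar><r \<longrightarrow> - g d = - g d' \<longrightarrow> d = d'"
      using li by (simp only: neg_equal_iff_equal)
    moreover have "\<forall>d\<in>{a..b}. - g d \<le> - g cm" using cm(2) by simp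
    moreover have "- g a = - g b" using eq by simp
    ultimately show False using locinj_max[of a b "\<lambda>x. - g x" cm] ab cm(1) by blast
  qed
  note nn = this
  have const: "\<forall>d\<in>{a..b}. g d = g a"
  proof (intro ballI)
    fix d assume "d \<in> {a..b}"
    hence "g d \<le> g cM" "g cm \<le> g d" using cM(2) cm(2) by auto
    thus "g d = g a" using nn nM by linarith
  qed
  obtain r where r: "r>0" "\<forall>d\<in>{a..b}. \<forall>d'\<in>{a..b}. \<bar>d-a\<bar><r \<longrightarrow> \<bar>d'-a\<bar><r \<longrightarrow> g d = g d' \<longrightarrow> d = d'"
  proof -
    have "a \<in> {a..b}" using ab by auto
    thus ?thesis using li that by blast
  qed
  define d where "d = min b (a + r/2)"
  have dd: "d \<in> {a..b}" "\<bar>d-a\<bar><r" "d \<noteq> a" using ab r unfolding d_def by auto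
  have aa: "a \<in> {a..b}" "\<bar>a-a\<bar><r" using ab r by auto
  have "g d = g a \<longrightarrow> d = a" using r(2)[rule_format, OF dd(1) aa(1) dd(2) aa(2)] by blast
  moreover have "g d = g a" using const \<open>d \<in> {a..b}\<close> by blast
  ultimately show False using \<open>d \<noteq> a\<close> by blast
qed



lemma nonreturn_nbhd:
  assumes H: "Hausdorff_space S" and fl: "flow S v" and x: "x \<in> topspace S"
   and np: "\<forall>t\<in>{\<delta>..N}. v t x \<noteq> x"
  obtains V where "openin S V" "x \<in> V" "\<forall>y\<in>V. \<forall>t\<in>{\<delta>..N}. v t y \<notin> V"
proof -
  have cm: "continuous_map (prod_topology euclideanreal S) S (\<lambda>(t,x). v t x)"
    using fl unfolding flow_def by blast
  have "\<forall>t\<in>{\<delta>..N}. \<exists>Op. \<exists>C. open Op \<and> t \<in> Op \<and> openin S C \<and> x \<in> C \<and> (\<forall>s\<in>Op. \<forall>y\<in>C. v s y \<notin> C)"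
  proof
    fix t assume t: "t \<in> {\<delta>..N}"
    have vx: "v t x \<in> topspace S" using flow_in[OF fl x] .
    have ne: "v t x \<noteq> x" using np t by blast
    obtain A B where AB: "openin S A" "openin S B" "v t x \<in> A" "x \<in> B" "disjnt A B"
      using H vx x ne unfolding Hausdorff_space_def by metis
    define P where "P = {p \<in> topspace (prod_topology euclideanreal S). (\<lambda>(t,x). v t x) p \<in> A}"
    have op: "openin (prod_topology euclideanreal S) P"
      unfolding P_def by (rule openin_continuous_map_preimage[OF cm AB(1)])
    have "(t,x) \<in> P" unfolding P_def using x AB(3) by simp
    then obtain Op C where OC: "openin euclideanreal Op" "openin S C" "t \<in> Op" "x \<in> C" "Op \<times> C \<subseteq> P"
      using op \<open>(t,x) \<in> P\<close> unfolding openin_prod_topology_alt by metis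
    have "\<forall>s\<in>Op. \<forall>y\<in>C \<inter> B. v s y \<notin> C \<inter> B"
    proof (intro ballI)
      fix s y assume "s \<in> Op" "y \<in> C \<inter> B"
      hence "(s,y) \<in> P" using OC(5) by blast
      hence "v s y \<in> A" unfolding P_def by simp
      thus "v s y \<notin> C \<inter> B" using AB(5) unfolding disjnt_def by blast
    qed
    moreover have "open Op" using OC(1) by simp
    moreover have "openin S (C \<inter> B)" using OC(2) AB(2) by blast
    ultimately show "\<exists>Op. \<exists>C. open Op \<and> t \<in> Op \<and> openin S C \<and> x \<in> C \<and> (\<forall>s\<in>Op. \<forall>y\<in>C. v s y \<notin> C)"
      using OC(3,4) AB(4) by (intro exI[of _ Op] exI[of _ "C \<inter> B"]) simp
  qed
  from bchoice[OF this] obtain Op where "\<forall>t\<in>{\<delta>..N}. \<exists>C. open (Op t) \<and> t \<in> Op t \<and> openin S C \<and> x \<in> C \<and> (\<forall>s\<in>Op t. \<forall>y\<in>C. v s y \<notin> C)"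
    by blast
  from bchoice[OF this] obtain C where OC: "\<forall>t\<in>{\<delta>..N}. open (Op t) \<and> t \<in> Op t \<and> openin S (C t) \<and> x \<in> C t \<and> (\<forall>s\<in>Op t. \<forall>y\<in>C t. v s y \<notin> C t)"
    by blast
  have cov: "{\<delta>..N} \<subseteq> (\<Union>t\<in>{\<delta>..N}. Op t)" using OC by blast
  obtain K where K: "K \<subseteq> {\<delta>..N}" "finite K" "{\<delta>..N} \<subseteq> (\<Union>t\<in>K. Op t)"
    using compactE_image[of "{\<delta>..N}" "{\<delta>..N}" Op, OF compact_Icc _ cov] OC by blast
  define V where "V = (\<Inter>t\<in>K. C t) \<inter> topspace S"
  have "openin S V" unfolding V_def using K OC by (intro openin_INT) auto
  moreover have "x \<in> V" unfolding V_def using K OC x by auto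
  moreover have "\<forall>y\<in>V. \<forall>t\<in>{\<delta>..N}. v t y \<notin> V"
  proof (intro ballI)
    fix y t assume y: "y \<in> V" and t: "t \<in> {\<delta>..N}"
    then obtain k where k: "k \<in> K" "t \<in> Op k" using K(3) by blast
    have "y \<in> C k" using y k(1) unfolding V_def by blast
    hence "v t y \<notin> C k" using OC k K(1) by blast
    thus "v t y \<notin> V" using k(1) unfolding V_def by blast
  qed
  ultimately show ?thesis using that by blast
qed



theorem mainTheorem6:
  fixes S :: "'a topology" and v :: "real \<Rightarrow> 'a \<Rightarrow> 'a" and \<gamma> :: "'a set"
  assumes "surface S" and "flow S v" and "wandering_holonomy S v \<gamma>"
  shows "\<not> periodic_orbit S v \<gamma> \<and>
         (\<exists>x\<in>\<gamma>. x \<in> nonwandering S v - S closure_of (Cl S v))"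
proof -
  have fl: "flow S v" by fact
  have H: "Hausdorff_space S" using assms(1) unfolding surface_def by blast
  have "\<exists>x\<in>\<gamma>. \<not> singular_point S v x \<and>
        (\<forall>U. openin S U \<and> x \<in> U \<longrightarrow>
           (\<exists>I h. I \<subseteq> U \<and> x \<in> I \<and> open_transverse_arc S v I h \<and>
                  orientation_reversing_return v I h \<and>
                  first_return_dom v I \<noteq> {} \<and>
                  first_return_dom v I \<inter> first_return v I ` first_return_dom v I = {}))"
    using assms(3) unfolding wandering_holonomy_def by (rule conjunct2)
  then obtain x where xg: "x \<in> \<gamma>" and
    hol: "\<forall>U. openin S U \<and> x \<in> U \<longrightarrow> (\<exists>I h. I \<subseteq> U \<and> x \<in> I \<and> open_transverse_arc S v I h \<and>
                  orientation_reversing_return v I h \<and>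
                  first_return_dom v I \<noteq> {} \<and>
                  first_return_dom v I \<inter> first_return v I ` first_return_dom v I = {})"
    by blast
  have gS: "\<gamma> \<subseteq> topspace S"
  proof -
    have nc: "nontrivial_circuit S v \<gamma>" using assms(3) unfolding wandering_holonomy_def by blast
    show ?thesis
    proof (cases "periodic_orbit S v \<gamma>")
      case True
      then obtain x0 where "x0 \<in> topspace S" "\<gamma> = orbit v x0"
        unfolding periodic_orbit_def periodic_point_def by blast
      thus ?thesis unfolding orbit_def using flow_in[OF fl] by auto
    next
      case False
      obtain c where c: "orientation_preserving_loop S v c" "\<gamma> = c ` {0..1}"
        using nc False unfolding nontrivial_circuit_def
        apply (elim disjE exE conjE)
         apply simp
        by (rule that)
      have "continuous_map euclideanreal S c" using c(1) unfolding orientation_preserving_loop_def by blast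
      hence "c ` UNIV \<subseteq> topspace S" using continuous_map_image_subset_topspace by fastforce
      thus ?thesis using c(2) by blast
    qed
  qed
  have xS: "x \<in> topspace S" using gS xg by blast
  obtain I0 h0 where I0: "x \<in> I0" "open_transverse_arc S v I0 h0"
    "first_return_dom v I0 \<inter> first_return v I0 ` first_return_dom v I0 = {}"
  proof -
    have "openin S (topspace S) \<and> x \<in> topspace S" using xS by simp
    from hol[rule_format, OF this] show ?thesis using that by meson
  qed
  have I0S: "I0 \<subseteq> topspace S" using arc_sub[OF I0(2)] .
  have np: "v T x \<noteq> x" if "T > 0" for T
    using no_periodic_in_arc[OF fl I0(2) I0(3) I0(1) that] by blast
  have p1: "\<not> periodic_orbit S v \<gamma>"
  proof
    assume "periodic_orbit S v \<gamma>"
    then obtain x0 T where x0: "x0 \<in> topspace S" "T>0" "v T x0 = x0" "\<gamma> = orbit v x0"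
      unfolding periodic_orbit_def periodic_point_def by blast
    then obtain s where s: "x = v s x0" using xg unfolding orbit_def by auto
    have "v T x = v (T + s) x0" using s flow_add[OF fl x0(1)] by simp
    also have "\<dots> = v (s + T) x0" by (simp add: add.commute)
    also have "\<dots> = x" using s flow_add[OF fl x0(1)] x0(3) by simp
    finally show False using np x0(2) by blast
  qed
  obtain \<epsilon>0 W0 where e0: "\<epsilon>0>0" "openin S W0" and hm0: "homeomorphic_map (prod_topology (subtopology euclideanreal {-\<epsilon>0<..<\<epsilon>0}) (subtopology S I0))
                         (subtopology S W0) (\<lambda>(t, y). v t y)"
    using I0(2) unfolding open_transverse_arc_def by blast
  define X0 where "X0 = prod_topology (subtopology euclideanreal {-\<epsilon>0<..<\<epsilon>0}) (subtopology S I0)"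
  obtain g0 where g0: "homeomorphic_maps X0 (subtopology S W0) (\<lambda>(t, y). v t y) g0"
    using hm0 unfolding X0_def homeomorphic_map_maps by blast
  have W0S: "W0 \<subseteq> topspace S" using e0(2) openin_subset by blast
  have tX0: "topspace X0 = {-\<epsilon>0<..<\<epsilon>0} \<times> I0" unfolding X0_def using I0S by auto
  have tW0: "topspace (subtopology S W0) = W0" using W0S by auto
  have g0i: "\<forall>p\<in>topspace X0. g0 ((\<lambda>(t, y). v t y) p) = p"
    and g0ii: "\<forall>w\<in>topspace (subtopology S W0). (\<lambda>(t, y). v t y) (g0 w) = w"
    using g0 unfolding homeomorphic_maps_def by blast+
  have F1: "g0 (v s j) = (s, j)" if "s \<in> {-\<epsilon>0<..<\<epsilon>0}" "j \<in> I0" for s j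
  proof -
    have "(s,j) \<in> topspace X0" using that tX0 by simp
    thus ?thesis using g0i by fastforce
  qed
  have F3: "v s j \<in> W0" if "s \<in> {-\<epsilon>0<..<\<epsilon>0}" "j \<in> I0" for s j
  proof -
    have "continuous_map X0 (subtopology S W0) (\<lambda>(t, y). v t y)"
      using g0 unfolding homeomorphic_maps_def by blast
    hence "(\<lambda>(t, y). v t y) ` topspace X0 \<subseteq> topspace (subtopology S W0)"
      by (rule continuous_map_image_subset_topspace)
    moreover have "(s,j) \<in> topspace X0" using that tX0 by simp
    ultimately show ?thesis using tW0 by fastforce
  qed
  have F2: "g0 w \<in> {-\<epsilon>0<..<\<epsilon>0} \<times> I0 \<and> v (fst (g0 w)) (snd (g0 w)) = w" if "w \<in> W0" for w
  proof -
    have "continuous_map (subtopology S W0) X0 g0"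
      using g0 unfolding homeomorphic_maps_def by blast
    hence "g0 ` topspace (subtopology S W0) \<subseteq> topspace X0"
      by (rule continuous_map_image_subset_topspace)
    hence "g0 w \<in> {-\<epsilon>0<..<\<epsilon>0} \<times> I0" using that tX0 tW0 by auto
    moreover have "(\<lambda>(t, y). v t y) (g0 w) = w" using g0ii that tW0 by blast
    ultimately show ?thesis by (simp add: case_prod_beta)
  qed
  have xW0: "x \<in> W0" using F3[of 0 x] e0(1) I0(1) flow_0[OF fl xS] by simp
  have noper: False if "z \<in> W0" "T > 0" "v T z = z" for z T
  proof -
    define s j where "s = fst (g0 z)" and "j = snd (g0 z)"
    have sj: "s \<in> {-\<epsilon>0<..<\<epsilon>0}" "j \<in> I0" "v s j = z" using F2[OF that(1)] s_def j_def by auto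
    have jS: "j \<in> topspace S" using sj I0S by blast
    have zS: "z \<in> topspace S" using that(1) W0S by blast
    have jz: "v (-s) z = j" using sj(3) flow_add[OF fl jS, of "-s" s] flow_0[OF fl jS] by simp
    have "v T j = v (T + -s) z" using flow_add[OF fl zS, of T "-s"] jz by simp
    also have "\<dots> = v (-s + T) z" by (simp add: add.commute)
    also have "\<dots> = j" using jz flow_add[OF fl zS, of "-s" T] that(3) by simp
    finally show False using no_periodic_in_arc[OF fl I0(2) I0(3) sj(2) that(2)] by blast
  qed
  have notcl: "x \<notin> S closure_of (Cl S v)"
  proof
    assume "x \<in> S closure_of (Cl S v)"
    then obtain z where z: "z \<in> Cl S v" "z \<in> W0" using xW0 e0(2) unfolding in_closure_of by blast
    have "\<exists>T>0. v T z = z"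
    proof (cases "singular_point S v z")
      case True thus ?thesis unfolding singular_point_def using zero_less_one by blast
    next
      case False thus ?thesis using z(1) unfolding Cl_def periodic_point_def by blast
    qed
    thus False using noper z(2) by blast
  qed
  define U1 where "U1 = {w \<in> topspace (subtopology S W0). fst (g0 w) \<in> {-\<epsilon>0/2<..<\<epsilon>0/2}}"
  have cg0: "continuous_map (subtopology S W0) X0 g0"
    using g0 unfolding homeomorphic_maps_def by blast
  have cfst: "continuous_map (subtopology S W0) euclideanreal (\<lambda>w. fst (g0 w))"
  proof -
    have "continuous_map X0 (subtopology euclideanreal {-\<epsilon>0<..<\<epsilon>0}) fst"
      unfolding X0_def by (rule continuous_map_fst)
    hence "continuous_map X0 euclideanreal fst"
      using continuous_map_in_subtopology by blast
    thus ?thesis using continuous_map_compose[OF cg0] by (simp add: o_def)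
  qed
  have csnd: "continuous_map (subtopology S W0) (subtopology S I0) (\<lambda>w. snd (g0 w))"
  proof -
    have "continuous_map X0 (subtopology S I0) snd"
      unfolding X0_def by (rule continuous_map_snd)
    thus ?thesis using continuous_map_compose[OF cg0] by (simp add: o_def)
  qed
  have "openin (subtopology S W0) U1"
    unfolding U1_def by (rule openin_continuous_map_preimage[OF cfst]) simp
  hence U1o: "openin S U1" "U1 \<subseteq> W0" using openin_open_subtopology[OF e0(2)] by auto
  have xU1: "x \<in> U1" unfolding U1_def using xW0 F1[of 0 x] flow_0[OF fl xS] e0(1) I0(1) xS by auto
  obtain h0i where h0: "homeomorphic_maps (subtopology euclideanreal {0<..<1}) (subtopology S I0) h0 h0i"
    using I0(2) homeomorphic_map_maps unfolding open_transverse_arc_def by blast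
  have ch0i: "continuous_map (subtopology S I0) (subtopology euclideanreal {0<..<1}) h0i"
    using h0 unfolding homeomorphic_maps_def by blast
  have h0h0i: "h0 (h0i w) = w" if "w \<in> I0" for w
    using h0 that I0S unfolding homeomorphic_maps_def by auto
  have short: False if arc: "open_transverse_arc S v I h" and IU: "I \<subseteq> U1"
    and disj: "first_return_dom v I \<inter> first_return v I ` first_return_dom v I = {}"
    and y: "y \<in> I" "0 < \<tau>" "\<tau> < \<epsilon>0/2" "v \<tau> y \<in> I" for I h y \<tau>
  proof -
    obtain \<epsilon>I where eI: "\<epsilon>I>0" and sepI: "\<And>y t. y\<in>I \<Longrightarrow> t \<noteq> 0 \<Longrightarrow> \<bar>t\<bar><\<epsilon>I \<Longrightarrow> v t y \<notin> I"
      using arc_inj[OF fl arc] by blast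
    have IS: "I \<subseteq> topspace S" using arc_sub[OF arc] .
    have hI: "h ` {0<..<1} = I" and hh: "homeomorphic_map (subtopology euclideanreal {0<..<1}) (subtopology S I) h"
      using arc unfolding open_transverse_arc_def by blast+
    have hinj: "inj_on h {0<..<1}" using homeomorphic_imp_injective_map[OF hh] by simp
    have ch: "continuous_map (subtopology euclideanreal {0<..<1}) (subtopology S I) h"
      using homeomorphic_imp_continuous_map[OF hh] .
    have chW: "continuous_map (subtopology euclideanreal {0<..<1}) (subtopology S W0) h"
      using ch IU U1o(2) unfolding continuous_map_in_subtopology by auto
    define Tt where "Tt = (\<lambda>d. fst (g0 (h d)))"
    define gg where "gg = (\<lambda>d. h0i (snd (g0 (h d))))"
    have cTt: "continuous_on {0<..<1} Tt"
    proof -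
      have "continuous_map (subtopology euclideanreal {0<..<1}) euclideanreal Tt"
        unfolding Tt_def using continuous_map_compose[OF chW cfst] by (simp add: o_def)
      thus ?thesis by simp
    qed
    have cgg: "continuous_on {0<..<1} gg"
    proof -
      have "continuous_map (subtopology euclideanreal {0<..<1}) (subtopology euclideanreal {0<..<1}) gg"
        unfolding gg_def using continuous_map_compose[OF continuous_map_compose[OF chW csnd] ch0i] by (simp add: o_def)
      hence "continuous_map (subtopology euclideanreal {0<..<1}) euclideanreal gg"
        using continuous_map_in_subtopology by blast
      thus ?thesis by simp
    qed
    have hW: "h d \<in> W0" if "d \<in> {0<..<1}" for d using that hI IU U1o(2) by blast
    have rep: "h d = v (Tt d) (snd (g0 (h d)))" "snd (g0 (h d)) \<in> I0" if "d \<in> {0<..<1}" for d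
      using F2[OF hW[OF that]] unfolding Tt_def by auto
    obtain a where a: "a \<in> {0<..<1}" "h a = y" using y(1) hI by blast
    obtain b where b: "b \<in> {0<..<1}" "h b = v \<tau> y" using y(4) hI by (metis imageE)
    have yS: "y \<in> topspace S" using y(1) IS by blast
    have "y \<noteq> v \<tau> y" using no_periodic_in_arc[OF fl arc disj y(1) y(2)] by metis
    hence ab: "a \<noteq> b" using a b by blast
    have "snd (g0 (v \<tau> y)) = snd (g0 y)"
    proof -
      define s j where "s = fst (g0 y)" and "j = snd (g0 y)"
      have yW: "y \<in> W0" and ys: "\<bar>s\<bar> < \<epsilon>0/2" using y(1) IU unfolding U1_def s_def by auto
      have sj: "j \<in> I0" "v s j = y" using F2[OF yW] s_def j_def by auto
      have jS: "j \<in> topspace S" using sj(1) I0S by blast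
      have "v \<tau> y = v (\<tau> + s) j" using flow_add[OF fl jS, of \<tau> s] sj(2) by simp
      moreover have "\<tau> + s \<in> {-\<epsilon>0<..<\<epsilon>0}" using ys y(2,3) by auto
      ultimately have "g0 (v \<tau> y) = (\<tau> + s, j)" using F1 sj(1) by simp
      thus ?thesis using j_def by simp
    qed
    hence gab: "gg a = gg b" unfolding gg_def using a b by simp
    have li: "\<exists>r>0. \<forall>d\<in>{0<..<1}. \<forall>d'\<in>{0<..<1}. \<bar>d-c\<bar><r \<longrightarrow> \<bar>d'-c\<bar><r \<longrightarrow> gg d = gg d' \<longrightarrow> d = d'"
      if c: "c \<in> {0<..<1}" for c
    proof -
      obtain r where r: "r>0" "\<forall>d\<in>{0<..<1}. dist d c < r \<longrightarrow> dist (Tt d) (Tt c) < \<epsilon>I/2"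
        using cTt c eI unfolding continuous_on_iff by (metis half_gt_zero)
      have "\<forall>d\<in>{0<..<1}. \<forall>d'\<in>{0<..<1}. \<bar>d-c\<bar><r \<longrightarrow> \<bar>d'-c\<bar><r \<longrightarrow> gg d = gg d' \<longrightarrow> d = d'"
      proof (intro ballI impI)
        fix d d' assume d: "d \<in> {0<..<1}" "d' \<in> {0<..<1}" "\<bar>d-c\<bar><r" "\<bar>d'-c\<bar><r" "gg d = gg d'"
        have j1: "snd (g0 (h d)) \<in> I0" "snd (g0 (h d')) \<in> I0" using rep d by auto
        have "h0 (gg d) = h0 (gg d')" using d(5) by simp
        hence jeq: "snd (g0 (h d)) = snd (g0 (h d'))" using h0h0i j1 unfolding gg_def by metis
        define j where "j = snd (g0 (h d'))"
        have jS: "j \<in> topspace S" using j1 I0S j_def by blast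
        have hd: "h d = v (Tt d) j" "h d' = v (Tt d') j"
          using rep(1)[OF d(1)] rep(1)[OF d(2)] jeq j_def by metis+
        have "h d = v (Tt d - Tt d') (h d')"
          using hd flow_add[OF fl jS, of "Tt d - Tt d'" "Tt d'"] by simp
        moreover have "\<bar>Tt d - Tt c\<bar> < \<epsilon>I/2" "\<bar>Tt d' - Tt c\<bar> < \<epsilon>I/2"
          using r(2) d unfolding dist_real_def by auto
        hence "\<bar>Tt d - Tt d'\<bar> < \<epsilon>I" by linarith
        moreover have "h d \<in> I" "h d' \<in> I" using hI d by auto
        ultimately have "Tt d = Tt d'" using sepI[of "h d'" "Tt d - Tt d'"] by auto
        hence "h d = h d'" using hd by simp
        thus "d = d'" using hinj d(1,2) by (meson inj_onD)
      qed
      thus ?thesis using r(1) by blast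
    qed
    define a' b' where "a' = min a b" and "b' = max a b"
    have ab': "a' < b'" "{a'..b'} \<subseteq> {0<..<1}" using ab a b unfolding a'_def b'_def by auto
    have "gg a' \<noteq> gg b'"
    proof (rule locinj_real[OF ab'(1)])
      show "continuous_on {a'..b'} gg" using cgg ab'(2) by (rule continuous_on_subset)
      show "\<forall>c\<in>{a'..b'}. \<exists>r>0. \<forall>d\<in>{a'..b'}. \<forall>d'\<in>{a'..b'}. \<bar>d-c\<bar><r \<longrightarrow> \<bar>d'-c\<bar><r \<longrightarrow> gg d = gg d' \<longrightarrow> d = d'"
      proof
        fix c assume "c \<in> {a'..b'}"
        hence "c \<in> {0<..<1}" using ab'(2) by blast
        from li[OF this] obtain r where "r>0" "\<forall>d\<in>{0<..<1}. \<forall>d'\<in>{0<..<1}. \<bar>d-c\<bar><r \<longrightarrow> \<bar>d'-c\<bar><r \<longrightarrow> gg d = gg d' \<longrightarrow> d = d'"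
          by blast
        thus "\<exists>r>0. \<forall>d\<in>{a'..b'}. \<forall>d'\<in>{a'..b'}. \<bar>d-c\<bar><r \<longrightarrow> \<bar>d'-c\<bar><r \<longrightarrow> gg d = gg d' \<longrightarrow> d = d'"
          using ab'(2) by blast
      qed
    qed
    moreover have "gg a' = gg b'" using gab unfolding a'_def b'_def by (cases "a \<le> b") auto
    ultimately show False by blast
  qed
  have nw: "x \<in> nonwandering S v"
  proof -
    have "\<forall>U. openin S U \<and> x \<in> U \<longrightarrow> (\<forall>N. \<exists>t>N. \<exists>y\<in>U. v t y \<in> U)"
    proof (intro allI impI)
      fix U N assume U: "openin S U \<and> x \<in> U"
      have "\<forall>t\<in>{\<epsilon>0/2..N}. v t x \<noteq> x" using np e0(1) by auto
      then obtain V where V: "openin S V" "x \<in> V" "\<forall>y\<in>V. \<forall>t\<in>{\<epsilon>0/2..N}. v t y \<notin> V"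
        using nonreturn_nbhd[OF H fl xS] by blast
      have "openin S (U \<inter> U1 \<inter> V) \<and> x \<in> U \<inter> U1 \<inter> V" using U V U1o xU1 by blast
      from hol[rule_format, OF this] obtain I h where Ih: "I \<subseteq> U \<inter> U1 \<inter> V" "open_transverse_arc S v I h"
        "first_return_dom v I \<noteq> {}" "first_return_dom v I \<inter> first_return v I ` first_return_dom v I = {}"
        by meson
      obtain y \<tau> where frt: "first_return_time v I y \<tau>" using Ih(3) unfolding first_return_dom_def by blast
      have yt: "y \<in> I" "\<tau> > 0" "v \<tau> y \<in> I" using frt unfolding first_return_time_def by auto
      have "\<not> \<tau> < \<epsilon>0/2"
      proof
        assume "\<tau> < \<epsilon>0/2"
        thus False using short[OF Ih(2) _ Ih(4) yt(1) yt(2) _ yt(3)] Ih(1) by blast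
      qed
      moreover have "\<not> \<tau> \<le> N"
      proof
        assume "\<tau> \<le> N"
        hence "\<tau> \<in> {\<epsilon>0/2..N}" using \<open>\<not> \<tau> < \<epsilon>0/2\<close> by auto
        thus False using V(3) yt Ih(1) by blast
      qed
      ultimately show "\<exists>t>N. \<exists>y\<in>U. v t y \<in> U" using yt Ih(1) by (intro exI[of _ \<tau>]) auto
    qed
    thus ?thesis unfolding nonwandering_def using xS by blast
  qed
  show ?thesis using p1 nw notcl xg by blast
qed


end
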